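(* Let $n,l\in\mathbb N$, $1<u\le2$ with $\frac1u+\frac1{u'}=1$, and $s>\frac{ln}u$. Let $B$ be a proper subset of $J_l=\{1,\dots,l\}$, with $\#B$ its number of elements. For $l_0\in J_l\setminus B$ define $$S_B^{l_0}(s)=\Big\{(x_1,\dots,x_l)\in R_B:\ \frac sn>\frac{\#B+1}{u}+\sum_{i\in J_l\setminus(B\cup\{l_0\})}x_i\Big\}.$$ Then the convex hull of $\bigcup_{l_0\in J_l\setminus B}S_B^{l_0}(s)$ equals $S_B(s)$.
   Context: $R_B=\{(x_1,\dots,x_l)\in(0,1)^l: 0<x_i\le\frac1u \text{ for } i\in B,\ \frac1u<x_i<1\text{ for } i\notin B\}$ and $S_B(s)=\{(x_1,\dots,x_l)\in R_B:\ \sum_{i\in J_l}x_i-\frac1{u'}<\frac sn+\sum_{i\in B}(x_i-\frac1u)\}$. *)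

theory Defs
  imports "HOL-Analysis.Analysis"
begin

text \<open>Points of R^l are vectors indexed by a finite type 'l, whose elements
play the role of the index set J_l = {1,...,l} (so l = CARD('l)).\<close>

definition R_B :: "real \<Rightarrow> 'l::finite set \<Rightarrow> (real^'l) set" where
  "R_B u B = {x. (\<forall>i. 0 < x$i \<and> x$i < 1) \<and>
                 (\<forall>i\<in>B. 0 < x$i \<and> x$i \<le> 1/u) \<and>
                 (\<forall>i. i \<notin> B \<longrightarrow> 1/u < x$i \<and> x$i < 1)}"

definition S_B :: "real \<Rightarrow> real \<Rightarrow> nat \<Rightarrow> real \<Rightarrow> 'l::finite set \<Rightarrow> (real^'l) set" where
  "S_B u u' n s B = {x \<in> R_B u B.
      (\<Sum>i\<in>UNIV. x$i) - 1/u' < s / real n + (\<Sum>i\<in>B. (x$i - 1/u))}"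

definition S_B_l0 :: "real \<Rightarrow> nat \<Rightarrow> real \<Rightarrow> 'l::finite set \<Rightarrow> 'l \<Rightarrow> (real^'l) set" where
  "S_B_l0 u n s B l0 = {x \<in> R_B u B.
      s / real n > (real (card B) + 1) / u + (\<Sum>i\<in>UNIV - (B \<union> {l0}). x$i)}"

end

theory Submission
  imports Defs
begin

lemma cvx_lt: "(p::real) > c \<Longrightarrow> q > c \<Longrightarrow> 0 \<le> mu \<Longrightarrow> 0 \<le> nu \<Longrightarrow> mu + nu = 1
   \<Longrightarrow> mu * p + nu * q > c"
proof -
  assume h: "p > c" "q > c" "0 \<le> mu" "0 \<le> nu" "mu + nu = 1"
  have cc: "c = c * (mu + nu)" using h(5) by simp
  have "mu * p + nu * q - c = mu * (p - c) + nu * (q - c)" by (subst cc) (simp add: algebra_simps)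
  moreover have "mu * (p - c) + nu * (q - c) > 0"
  proof (cases "mu = 0")
    case True then show ?thesis using h by simp
  next
    case False then have "mu > 0" using h by simp
    then show ?thesis using h by (simp add: add_pos_nonneg)
  qed
  ultimately show ?thesis by simp
qed

lemma cvx_le: "(p::real) \<le> c \<Longrightarrow> q \<le> c \<Longrightarrow> 0 \<le> mu \<Longrightarrow> 0 \<le> nu \<Longrightarrow> mu + nu = 1
   \<Longrightarrow> mu * p + nu * q \<le> c"
proof -
  assume h: "p \<le> c" "q \<le> c" "0 \<le> mu" "0 \<le> nu" "mu + nu = 1"
  have "mu * p + nu * q \<le> mu * c + nu * c" using h by (simp add: add_mono mult_left_mono)
  also have "mu * c + nu * c = c" using h(5) by (metis distrib_right mult_1)
  finally show ?thesis .
qed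

lemma cvx_ub: "(p::real) < c \<Longrightarrow> q < c \<Longrightarrow> 0 \<le> mu \<Longrightarrow> 0 \<le> nu \<Longrightarrow> mu + nu = 1
   \<Longrightarrow> mu * p + nu * q < c"
  using cvx_lt[of "-c" "-p" "-q" mu nu] by simp

theorem proposition5p3:
  fixes n :: nat and u u' s :: real and B :: "'l::finite set"
  assumes "n \<ge> 1"
    and "1 < u" and "u \<le> 2" and "1/u + 1/u' = 1"
    and "s > real CARD('l) * real n / u"
    and "B \<subset> UNIV"
  shows "convex hull (\<Union>l0\<in>UNIV - B. S_B_l0 u n s B l0) = S_B u u' n s B"
proof -
  define a where "a = 1/u"
  define t where "t = s / real n"
  define C where "C = UNIV - B"
  define T where "T = t - (real (card B) + 1) * a"
  have a: "0 < a" "a < 1" using assms(2) unfolding a_def by auto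
  have u': "1/u' = 1 - a" using assms(4) unfolding a_def by linarith
  have npos: "real n > 0" using assms(1) by simp
  have tl: "t > real CARD('l) * a"
  proof -
    have "real CARD('l) * real n / u / real n < s / real n"
      by (rule divide_strict_right_mono[OF assms(5) npos])
    moreover have "real CARD('l) * real n / u / real n = real CARD('l) / u" using npos by simp
    ultimately show ?thesis unfolding t_def a_def by simp
  qed
  have cardC: "real CARD('l) = real (card B) + real (card C)"
  proof -
    have "B \<union> C = UNIV" "B \<inter> C = {}" unfolding C_def by auto
    then have "card (UNIV::'l set) = card B + card C"
      by (metis card_Un_disjoint finite)
    then show ?thesis by simp
  qed
  have Cne: "C \<noteq> {}" using assms(6) unfolding C_def by auto
  have split: "\<And>f. (\<Sum>i\<in>UNIV. f i) = (\<Sum>i\<in>B. f i) + (\<Sum>i\<in>C. f i)"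
    unfolding C_def by (simp add: sum.subset_diff[of B UNIV] add.commute)
  have Rchar: "\<And>x. x \<in> R_B u B \<longleftrightarrow> (\<forall>i\<in>B. 0 < x$i \<and> x$i \<le> a) \<and> (\<forall>i\<in>C. a < x$i \<and> x$i < 1)"
    unfolding R_B_def C_def a_def[symmetric] using a by (auto, (metis DiffI UNIV_I less_trans order.strict_trans1)+)
  have SBiff: "\<And>x. x \<in> S_B u u' n s B \<longleftrightarrow> x \<in> R_B u B \<and> (\<Sum>i\<in>C. x$i) < T + 1"
  proof -
    fix x :: "real^'l"
    have "(\<Sum>i\<in>B. (x$i - 1/u)) = (\<Sum>i\<in>B. x$i) - real (card B) * a"
      by (simp add: sum_subtractf a_def)
    then show "x \<in> S_B u u' n s B \<longleftrightarrow> x \<in> R_B u B \<and> (\<Sum>i\<in>C. x$i) < T + 1"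
      unfolding S_B_def T_def t_def using split[of "\<lambda>i. x$i"] u'
      by (auto simp: algebra_simps)
  qed
  have Sl0iff: "\<And>x j. j \<in> C \<Longrightarrow> x \<in> S_B_l0 u n s B j \<longleftrightarrow> x \<in> R_B u B \<and> (\<Sum>i\<in>C. x$i) - x$j < T"
  proof -
    fix x :: "real^'l" and j assume j: "j \<in> C"
    have e: "UNIV - (B \<union> {j}) = C - {j}" unfolding C_def by auto
    have "(\<Sum>i\<in>C. x$i) = x$j + (\<Sum>i\<in>C - {j}. x$i)" using j by (simp add: sum.remove)
    then show "x \<in> S_B_l0 u n s B j \<longleftrightarrow> x \<in> R_B u B \<and> (\<Sum>i\<in>C. x$i) - x$j < T"
      unfolding S_B_l0_def T_def t_def e a_def by (auto simp: algebra_simps add_divide_distrib)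
  qed
  have sub: "S_B_l0 u n s B j \<subseteq> S_B u u' n s B" if j: "j \<in> C" for j
  proof
    fix x assume "x \<in> S_B_l0 u n s B j"
    then have "x \<in> R_B u B" "(\<Sum>i\<in>C. x$i) - x$j < T" using Sl0iff[OF j] by auto
    moreover have "x$j < 1" using calculation(1) Rchar j by auto
    ultimately show "x \<in> S_B u u' n s B" using SBiff by auto
  qed
  have cvx: "convex (S_B u u' n s B)"
    unfolding convex_def
  proof (intro allI impI ballI)
    fix x y :: "real^'l" and mu nu :: real
    assume x: "x \<in> S_B u u' n s B" and y: "y \<in> S_B u u' n s B" and h: "0 \<le> mu" "0 \<le> nu" "mu + nu = 1"
    have cs: "(\<Sum>i\<in>C. (mu *\<^sub>R x + nu *\<^sub>R y)$i) = mu * (\<Sum>i\<in>C. x$i) + nu * (\<Sum>i\<in>C. y$i)"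
      by (simp add: sum.distrib sum_distrib_left)
    show "mu *\<^sub>R x + nu *\<^sub>R y \<in> S_B u u' n s B"
      unfolding SBiff Rchar cs using x y h unfolding SBiff Rchar
      by (auto intro!: cvx_lt cvx_le cvx_ub)
  qed
  show ?thesis
  proof
    show "convex hull (\<Union>l0\<in>UNIV - B. S_B_l0 u n s B l0) \<subseteq> S_B u u' n s B"
      by (rule hull_minimal) (use sub cvx C_def in auto)
  next
    show "S_B u u' n s B \<subseteq> convex hull (\<Union>l0\<in>UNIV - B. S_B_l0 u n s B l0)"
    proof
      fix x assume xS: "x \<in> S_B u u' n s B"
      have xR: "x \<in> R_B u B" and xsum: "(\<Sum>i\<in>C. x$i) < T + 1" using xS SBiff by auto
      have inh: "z \<in> convex hull (\<Union>l0\<in>UNIV - B. S_B_l0 u n s B l0)"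
        if "j \<in> C" "z \<in> S_B_l0 u n s B j" for z j
        by (rule hull_inc) (use that C_def in auto)
      show "x \<in> convex hull (\<Union>l0\<in>UNIV - B. S_B_l0 u n s B l0)"
      proof (cases "\<exists>j\<in>C. x \<in> S_B_l0 u n s B j")
        case True then show ?thesis using inh by auto
      next
        case False
        define S where "S = (\<Sum>i\<in>C. x$i)"
        define m where "m = real (card C)"
        define T' where "T' = T - (m - 1) * a"
        define rho where "rho = min T' (T + 1 - S) / 2"
        define d where "d i = x$i - a" for i
        define Dt where "Dt = (\<Sum>i\<in>C. d i)"
        define w where "w j = S - x$j - T + rho" for j
        define E where "E j = Dt - d j" for j
        define th where "th j = w j / E j" for j
        define Z where "Z = (\<Sum>k\<in>C. d k / th k)"
        define lam where "lam j = d j / th j / Z" for j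
        define z where "z j = (\<chi> i. if i \<in> C then x$i + th j * ((if i = j then Dt else 0) - d i) else x$i)" for j
        have xC: "\<And>i. i \<in> C \<Longrightarrow> a < x$i \<and> x$i < 1" using xR Rchar by auto
        have xB: "\<And>i. i \<in> B \<Longrightarrow> 0 < x$i \<and> x$i \<le> a" using xR Rchar by auto
        have Sj: "\<And>j. j \<in> C \<Longrightarrow> S - x$j \<ge> T" using False Sl0iff xR unfolding S_def by force
        have T'pos: "T' > 0" using tl cardC unfolding T'_def T_def m_def by (simp add: algebra_simps)
        have rho: "0 < rho" "rho < T'" "rho < T + 1 - S" using T'pos xsum unfolding rho_def S_def by auto
        have Dt: "Dt = S - m * a" unfolding Dt_def d_def S_def m_def by (simp add: sum_subtractf)
        have dpos: "\<And>i. i \<in> C \<Longrightarrow> d i > 0" using xC unfolding d_def by auto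
        have wpos: "\<And>j. j \<in> C \<Longrightarrow> w j > 0" using Sj rho unfolding w_def by force
        have wE: "\<And>j. j \<in> C \<Longrightarrow> w j < E j" using rho Dt unfolding w_def E_def d_def T'_def
          by (simp add: algebra_simps)
        have thpos: "\<And>j. j \<in> C \<Longrightarrow> 0 < th j \<and> th j < 1"
          using wpos wE unfolding th_def by (auto simp: divide_simps) (smt (verit) wE wpos)+
        have thE: "\<And>j. j \<in> C \<Longrightarrow> th j * E j = w j"
          using wpos wE unfolding th_def by (smt (verit) nonzero_eq_divide_eq)
        have Zpos: "Z > 0" unfolding Z_def
          using Cne dpos thpos by (intro sum_pos) auto
        have "(\<Sum>j\<in>C. lam j) = (\<Sum>j\<in>C. d j / th j) / Z" unfolding lam_def
          by (rule sum_divide_distrib[symmetric])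
        then have lamsum: "(\<Sum>j\<in>C. lam j) = 1" using Zpos unfolding Z_def by simp
        have lamnn: "\<And>j. j \<in> C \<Longrightarrow> lam j \<ge> 0" unfolding lam_def using Zpos dpos thpos
          by (simp add: less_imp_le)
        have lamth: "lam j * th j = d j / Z" if j: "j \<in> C" for j
        proof -
          have "th j \<noteq> 0" using thpos[OF j] by simp
          then show ?thesis unfolding lam_def by simp
        qed
        have zin: "z j \<in> S_B_l0 u n s B j" if j: "j \<in> C" for j
        proof -
          have zB: "\<forall>i\<in>B. 0 < z j $ i \<and> z j $ i \<le> a"
          proof
            fix i assume "i \<in> B" then have "i \<notin> C" unfolding C_def by auto
            then show "0 < z j $ i \<and> z j $ i \<le> a" using xB \<open>i \<in> B\<close> unfolding z_def by auto
          qed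
          have zC: "\<forall>i\<in>C. a < z j $ i \<and> z j $ i < 1"
          proof
            fix i assume i: "i \<in> C"
            show "a < z j $ i \<and> z j $ i < 1"
            proof (cases "i = j")
              case True
              have "z j $ i = x$j + w j" using i True thE[OF j] unfolding z_def E_def
                by (simp add: algebra_simps)
              moreover have "x$j + w j < 1" using rho unfolding w_def S_def by auto
              ultimately show ?thesis using wpos[OF j] xC[OF i] True by auto
            next
              case False
              have "z j $ i = x$i - th j * d i" using i False unfolding z_def by simp
              moreover have "th j * d i < d i" using thpos[OF j] dpos[OF i] by simp
              moreover have "th j * d i > 0" using thpos[OF j] dpos[OF i] by simp
              ultimately show ?thesis using xC[OF i] d_def[of i] by linarith
            qed
          qed
          have zR: "z j \<in> R_B u B" using zB zC Rchar by blast
          have "(\<Sum>i\<in>C. z j $ i) = (\<Sum>i\<in>C. x$i + th j * (if i = j then Dt else 0) - th j * d i)"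
            unfolding z_def by (intro sum.cong) (auto simp: algebra_simps)
          also have "\<dots> = (\<Sum>i\<in>C. x$i) + (\<Sum>i\<in>C. th j * (if i = j then Dt else 0)) - (\<Sum>i\<in>C. th j * d i)"
            by (simp only: sum.distrib sum_subtractf)
          also have "(\<Sum>i\<in>C. th j * (if i = j then Dt else 0)) = th j * Dt"
            by (subst sum_distrib_left[symmetric]) (simp add: j)
          also have "(\<Sum>i\<in>C. th j * d i) = th j * Dt" by (simp add: Dt_def sum_distrib_left)
          also have "(\<Sum>i\<in>C. x$i) = S" by (simp add: S_def)
          finally have zs: "(\<Sum>i\<in>C. z j $ i) = S" by simp
          have zj: "z j $ j = x$j + w j" using j thE[OF j] unfolding z_def E_def
            by (simp add: algebra_simps)
          have "(\<Sum>i\<in>C. z j $ i) - z j $ j < T" unfolding zs zj w_def using rho by simp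
          then show ?thesis using Sl0iff[OF j] zR by auto
        qed
        have xeq: "x = (\<Sum>j\<in>C. lam j *\<^sub>R z j)"
        unfolding vec_eq_iff proof
          fix i
          show "x $ i = (\<Sum>j\<in>C. lam j *\<^sub>R z j) $ i"
          proof (cases "i \<in> C")
            case False
            then show ?thesis unfolding z_def using lamsum
              by (simp add: sum_distrib_right[symmetric])
          next
            case True
            have "(\<Sum>j\<in>C. lam j *\<^sub>R z j) $ i
                = (\<Sum>j\<in>C. lam j * x$i + (lam j * th j) * (if i = j then Dt else 0) - (lam j * th j) * d i)"
              unfolding z_def sum_component using True by (intro sum.cong) (auto simp: algebra_simps)
            also have "\<dots> = (\<Sum>j\<in>C. lam j * x$i + (d j / Z) * (if i = j then Dt else 0) - (d j / Z) * d i)"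
              using lamth by (intro sum.cong) auto
            also have "\<dots> = (\<Sum>j\<in>C. lam j * x$i) + (\<Sum>j\<in>C. (d j / Z) * (if i = j then Dt else 0)) - (\<Sum>j\<in>C. (d j / Z) * d i)"
              by (simp only: sum.distrib sum_subtractf)
            also have "(\<Sum>j\<in>C. lam j * x$i) = x$i"
              using lamsum by (simp add: sum_distrib_right[symmetric])
            also have "(\<Sum>j\<in>C. (d j / Z) * (if i = j then Dt else 0)) = d i / Z * Dt"
              using True by (simp add: if_distrib cong: if_cong)
            also have "(\<Sum>j\<in>C. (d j / Z) * d i) = d i / Z * Dt"
              unfolding Dt_def by (simp add: sum_distrib_left sum_divide_distrib[symmetric] mult.commute)
            finally show ?thesis by simp
          qed
        qed
        show ?thesis unfolding xeq
          by (rule convex_sum) (use lamsum lamnn zin inh in auto)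
      qed
    qed
  qed
qed

end
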